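(* Let $n,p\in\mathbb{N}$, $0\le\lambda\le1$. Let $f$ be analytic in $\mathrm{U}=\{|z|<1\}$ of the form $f(z)=z^p+\sum_{k=p+n}^\infty a_kz^k$, put $\mathcal{F}_\lambda(z)=(1-\lambda)f(z)+\lambda zf'(z)$, and assume $\mathcal{F}_\lambda(z)\mathcal{F}_\lambda'(z)\neq0$ for all $z\in\mathrm{U}\setminus\{0\}$. Let $M\ge p$. If $$\operatorname{Re}\left[-\frac{z\mathcal{F}_\lambda'(z)}{\mathcal{F}_\lambda(z)}+1+\frac{z\mathcal{F}_\lambda''(z)}{\mathcal{F}_\lambda'(z)}\right]<\frac{nM}{M+p},\quad z\in\mathrm{U},$$ then $$\left|\frac{z\mathcal{F}_\lambda'(z)}{\mathcal{F}_\lambda(z)}-p\right|<M,\quad z\in\mathrm{U}.$$ *)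

theory Defs
  imports "HOL-Analysis.Analysis"
begin

definition Flam :: "real \<Rightarrow> (complex \<Rightarrow> complex) \<Rightarrow> complex \<Rightarrow> complex" where
  "Flam lam f z = (1 - complex_of_real lam) * f z + complex_of_real lam * z * deriv f z"

end

theory Submission
  imports Defs "HOL-Complex_Analysis.Complex_Analysis"
begin

lemma final_ineq:
  fixes W :: complex and M m p n :: real
  assumes "cmod W = 1" "p \<ge> 1" "M \<ge> p" "m \<ge> n" "n \<ge> 1" "of_real p + of_real M * W \<noteq> 0"
  shows "Re (of_real M * of_real m * W / (of_real p + of_real M * W)) \<ge> n * M / (M + p)"
proof -
  define a where "a = Re W"
  define b where "b = Im W"
  have ab: "a^2 + b^2 = 1" using assms(1) unfolding a_def b_def cmod_def
    by (metis real_sqrt_eq_1_iff)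
  have a1: "a \<le> 1" using abs_Re_le_cmod[of W] assms(1) unfolding a_def by linarith
  define D where "D = (p + M*a)^2 + (M*b)^2"
  have Dne: "D \<noteq> 0" using assms(6) unfolding D_def a_def b_def
    by (metis complex_eq_iff mult_eq_0_iff Re_complex_of_real Im_complex_of_real
        plus_complex.sel times_complex.sel add_cancel_right_left mult_zero_left power_eq_0_iff
        sum_power2_eq_zero_iff zero_complex.sel diff_zero)
  have Dpos: "D > 0" using Dne unfolding D_def by (simp add: add_pos_nonneg sum_power2_gt_zero_iff)
  have D2: "D = p^2 + 2*p*M*a + M^2" unfolding D_def using ab
    by (simp add: power2_eq_square algebra_simps) (metis (no_types, lifting) add_diff_cancel_left' diff_add_cancel distrib_left mult.assoc mult_1_right power2_eq_square ab)
  have R0: "Re (of_real M * of_real m * W / (of_real p + of_real M * W)) = M*m*(p*a + M*(a^2+b^2)) / D"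
    unfolding Re_divide D_def a_def b_def
    by (simp add: power2_eq_square algebra_simps)
  have R: "Re (of_real M * of_real m * W / (of_real p + of_real M * W)) = M*m*(p*a + M) / D"
    using R0 ab by simp
  have key: "(p*a + M) * (M+p) \<ge> D" unfolding D2
  proof -
    have "(p*a + M) * (M+p) - (p^2 + 2*p*M*a + M^2) = p*(M-p)*(1-a)"
      by (simp add: power2_eq_square algebra_simps)
    moreover have "p*(M-p)*(1-a) \<ge> 0" using assms a1 by simp
    ultimately show "(p*a + M) * (M+p) \<ge> p^2 + 2*p*M*a + M^2" by linarith
  qed
  have Mp: "M + p > 0" using assms by linarith
  have "(p*a+M)/D \<ge> 1/(M+p)" using key Dpos Mp by (simp add: field_simps)
  hence "M*m*((p*a+M)/D) \<ge> M*n*(1/(M+p))"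
    using assms by (intro mult_mono) (auto intro: mult_left_mono)
  thus ?thesis unfolding R by (simp add: mult.commute)
qed

lemma hsum_lemma:
  fixes a :: "nat \<Rightarrow> complex" and f :: "complex \<Rightarrow> complex"
  assumes asum: "(\<lambda>k. if k \<ge> N then a k * z ^ k else 0) sums (f z - z ^ p)"
    and N2: "N \<ge> 1" and p: "p \<ge> 1"
  shows "(\<lambda>j. a (j + N) * z ^ j) sums (suminf (\<lambda>j. a (j + N) * z ^ j)) \<and>
         f z = z ^ p + z ^ N * suminf (\<lambda>j. a (j + N) * z ^ j)"
proof (cases "z = 0")
  case True
  have "(\<lambda>k. if k \<ge> N then a k * z ^ k else 0) = (\<lambda>k. 0)"
    using True N2 by (auto simp: fun_eq_iff)
  hence "(\<lambda>k. 0) sums (f z - z ^ p)" using asum by simp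
  hence f0: "f z - z ^ p = 0" using sums_zero sums_unique2 by blast
  have "(\<lambda>j. a (j + N) * z ^ j) sums a N"
    using powser_sums_zero[of "\<lambda>j. a (j + N)"] True by simp
  hence "suminf (\<lambda>j. a (j + N) * z ^ j) = a N" "summable (\<lambda>j. a (j + N) * z ^ j)"
    by (simp_all add: sums_iff)
  thus ?thesis using f0 True N2 p by (simp add: summable_sums)
next
  case False
  have "(\<lambda>i. (\<lambda>k. if k \<ge> N then a k * z ^ k else 0) (i + N)) sums
         (f z - z ^ p - (\<Sum>i<N. (\<lambda>k. if k \<ge> N then a k * z ^ k else 0) i))"
    using asum sums_iff_shift[of "(\<lambda>k. if k \<ge> N then a k * z ^ k else 0)" N] by simp
  hence "(\<lambda>i. a (i + N) * z ^ (i + N)) sums (f z - z ^ p)"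
    by simp
  from sums_divide[OF this, of "z ^ N"]
  have s: "(\<lambda>j. a (j + N) * z ^ j) sums ((f z - z ^ p) / z ^ N)"
    using False by (simp add: power_add)
  hence "suminf (\<lambda>j. a (j + N) * z ^ j) = (f z - z ^ p) / z ^ N" by (simp add: sums_iff)
  thus ?thesis using s False by (simp add: sums_iff)
qed

theorem corollary3p11:
  fixes f :: "complex \<Rightarrow> complex" and n p :: nat and lam M :: real
  assumes "n \<ge> 1" and "p \<ge> 1"
    and "0 \<le> lam" and "lam \<le> 1"
    and "f holomorphic_on ball 0 1"
    and "\<exists>a :: nat \<Rightarrow> complex. \<forall>z\<in>ball 0 1.
           (\<lambda>k. if k \<ge> p + n then a k * z ^ k else 0) sums (f z - z ^ p)"
    and "\<forall>z\<in>ball 0 1 - {0}. Flam lam f z * deriv (Flam lam f) z \<noteq> 0"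
    and "M \<ge> real p"
    and "\<forall>z\<in>ball 0 1 - {0}.
           Re (- (z * deriv (Flam lam f) z / Flam lam f z) + 1
               + z * deriv (deriv (Flam lam f)) z / deriv (Flam lam f) z)
           < real n * M / (M + real p)"
  shows "\<forall>z\<in>ball 0 1 - {0}.
           cmod (z * deriv (Flam lam f) z / Flam lam f z - of_nat p) < M"
proof -
  obtain a :: "nat \<Rightarrow> complex" where asum: "\<And>z. z \<in> ball 0 1 \<Longrightarrow>
      (\<lambda>k. if k \<ge> p + n then a k * z ^ k else 0) sums (f z - z ^ p)"
    using assms(6) by blast
  define N where "N = p + n"
  have N2: "N \<ge> 2" using assms(1,2) unfolding N_def by simp
  define h where "h z = suminf (\<lambda>j. a (j + N) * z ^ j)" for z
  have hsum: "(\<lambda>j. a (j + N) * z ^ j) sums h z \<and> f z = z ^ p + z ^ N * h z" if z: "z \<in> ball 0 1" for z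
    using hsum_lemma[of N a z f p] asum[OF z] N2 assms(2) unfolding h_def N_def by simp
  have holh: "h holomorphic_on ball 0 1"
    by (rule power_series_holomorphic[where a = "\<lambda>j. a (j + N)"]) (use hsum in auto)
  define h' where "h' = deriv h"
  have holh': "h' holomorphic_on ball 0 1" unfolding h'_def using holh by (simp add: holomorphic_deriv)
  have hder: "(h has_field_derivative h' z) (at z)" if "z \<in> ball 0 1" for z
    unfolding h'_def using holomorphic_derivI[OF holh _ that] by simp
  obtain pp where pp: "p = Suc pp" using assms(2) by (cases p) auto
  obtain nn where nn: "n = Suc nn" using assms(1) by (cases n) auto
  have fder: "deriv f z = of_nat p * z ^ pp + (of_nat N * z ^ (pp + n) * h z + z ^ N * h' z)"
    if z: "z \<in> ball 0 1" for z
  proof -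
    have "((\<lambda>z. z ^ p + z ^ N * h z) has_field_derivative
        of_nat p * z ^ pp + (of_nat N * z ^ (pp + n) * h z + z ^ N * h' z)) (at z)"
    proof -
      have "((\<lambda>z. z ^ p + z ^ N * h z) has_field_derivative
        of_nat p * z ^ (p - 1) + (of_nat N * z ^ (N - 1) * h z + z ^ N * h' z)) (at z)"
        using hder[OF z] by (auto intro!: derivative_eq_intros)
      moreover have "p - 1 = pp" "N - 1 = pp + n" unfolding N_def pp by simp_all
      ultimately show ?thesis by simp
    qed
    hence "(f has_field_derivative
        of_nat p * z ^ pp + (of_nat N * z ^ (pp + n) * h z + z ^ N * h' z)) (at z)"
      by (rule has_field_derivative_transform_within_open[where S = "ball 0 1"])
         (use z hsum in auto)
    thus ?thesis by (rule DERIV_imp_deriv)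
  qed
  define F where "F = Flam lam f"
  define c :: complex where "c = of_real (1 - lam + lam * real p)"
  define H where "H z = of_real (1 - lam + lam * real N) * h z + of_real lam * z * h' z" for z
  define \<Phi> where "\<Phi> z = c + z ^ n * H z" for z
  have c1: "Re c \<ge> 1"
  proof -
    have "lam * 1 \<le> lam * real p" using assms(2,3) by (intro mult_left_mono) auto
    thus ?thesis unfolding c_def by simp
  qed
  hence c0: "c \<noteq> 0" by auto
  have holH: "H holomorphic_on ball 0 1" unfolding H_def
    using holh holh' by (intro holomorphic_intros) auto
  have hol\<Phi>: "\<Phi> holomorphic_on ball 0 1" unfolding \<Phi>_def using holH by (intro holomorphic_intros) auto
  have holF: "F holomorphic_on ball 0 1" unfolding F_def Flam_def
    using assms(5) holomorphic_deriv[OF assms(5)] by (intro holomorphic_intros) auto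
  have Feq: "F z = z ^ p * \<Phi> z" if z: "z \<in> ball 0 1" for z
  proof -
    have "F z = (1 - of_real lam) * (z ^ p + z ^ N * h z) + of_real lam * z *
         (of_nat p * z ^ pp + (of_nat N * z ^ (pp + n) * h z + z ^ N * h' z))"
      unfolding F_def Flam_def using hsum[OF z] fder[OF z] by simp
    also have "\<dots> = (1 - of_real lam) * (z ^ p + z ^ N * h z) + of_real lam *
         (of_nat p * z ^ p + (of_nat N * z ^ N * h z + z * z ^ N * h' z))"
      unfolding N_def pp by (simp add: algebra_simps)
    also have "\<dots> = z ^ p * c + z ^ N * H z"
      unfolding H_def c_def by (simp add: algebra_simps)
    also have "\<dots> = z ^ p * \<Phi> z"
      unfolding \<Phi>_def N_def by (simp add: algebra_simps power_add)
    finally show ?thesis .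
  qed
  have M0: "M > 0" using assms(2,8) by simp
  have \<Phi>ne: "\<Phi> z \<noteq> 0" if z: "z \<in> ball 0 1" for z
  proof (cases "z = 0")
    case True thus ?thesis using c0 unfolding \<Phi>_def nn by simp
  next
    case False
    hence "F z \<noteq> 0" using assms(7) z unfolding F_def by auto
    thus ?thesis using Feq[OF z] by auto
  qed
  define H' where "H' = deriv H"
  have Hder: "(H has_field_derivative H' z) (at z)" if "z \<in> ball 0 1" for z
    unfolding H'_def using holomorphic_derivI[OF holH _ that] by simp
  have holH': "H' holomorphic_on ball 0 1" unfolding H'_def using holH by (simp add: holomorphic_deriv)
  define \<Phi>' where "\<Phi>' z = of_nat n * z ^ (n - 1) * H z + z ^ n * H' z" for z
  have \<Phi>der: "(\<Phi> has_field_derivative \<Phi>' z) (at z)" if z: "z \<in> ball 0 1" for z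
    unfolding \<Phi>_def \<Phi>'_def using Hder[OF z] by (auto intro!: derivative_eq_intros)
  have Fder: "(F has_field_derivative (of_nat p * z ^ (p - 1) * \<Phi> z + z ^ p * \<Phi>' z)) (at z)"
    if z: "z \<in> ball 0 1" for z
  proof -
    have "((\<lambda>z. z ^ p * \<Phi> z) has_field_derivative (of_nat p * z ^ (p - 1) * \<Phi> z + z ^ p * \<Phi>' z)) (at z)"
      using \<Phi>der[OF z] by (auto intro!: derivative_eq_intros)
    thus ?thesis
      by (rule has_field_derivative_transform_within_open[where S = "ball 0 1"]) (use z Feq in auto)
  qed
  define G where "G z = (of_nat n * H z + z * H' z) / (of_real M * \<Phi> z)" for z
  define w where "w z = z ^ n * G z" for z
  have holG: "G holomorphic_on ball 0 1" unfolding G_def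
    using holH holH' hol\<Phi> \<Phi>ne M0 by (intro holomorphic_intros) auto
  have holw: "w holomorphic_on ball 0 1" unfolding w_def using holG by (intro holomorphic_intros) auto
  have wq: "z * deriv F z / F z - of_nat p = of_real M * w z" if z: "z \<in> ball 0 1" "z \<noteq> 0" for z
  proof -
    have dF: "deriv F z = of_nat p * z ^ (p - 1) * \<Phi> z + z ^ p * \<Phi>' z"
      using Fder[OF z(1)] by (rule DERIV_imp_deriv)
    have e1: "z * z ^ (p - 1) = z ^ p" using assms(2) by (simp add: power_eq_if)
    have e2: "z * z ^ (n - 1) = z ^ n" using assms(1) by (simp add: power_eq_if)
    have "z * deriv F z = z ^ p * (of_nat p * \<Phi> z + z * \<Phi>' z)"
      unfolding dF using e1 by (simp add: algebra_simps)
    also have "z * \<Phi>' z = z ^ n * (of_nat n * H z + z * H' z)"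
      unfolding \<Phi>'_def using e2 by (simp add: algebra_simps)
    finally have "z * deriv F z = z ^ p * (of_nat p * \<Phi> z + z ^ n * (of_nat n * H z + z * H' z))" .
    thus ?thesis unfolding Feq[OF z(1)] w_def G_def using \<Phi>ne[OF z(1)] z(2) M0
      by (simp add: field_simps)
  qed
  have w0: "w 0 = 0" unfolding w_def using assms(1) by simp
  have contw: "continuous_on (ball 0 1) w" using holw by (rule holomorphic_on_imp_continuous_on)
  have wder: "(w has_field_derivative deriv w z) (at z)" if "z \<in> ball 0 1" for z
    using holomorphic_derivI[OF holw _ that] by simp
  show ?thesis
  proof (rule ccontr)
    assume "\<not> ?thesis"
    then obtain z1 where z1': "z1 \<in> ball 0 1 - {0}"
      "\<not> cmod (z1 * deriv F z1 / F z1 - of_nat p) < M"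
      unfolding F_def by blast
    hence z1: "z1 \<in> ball 0 1" "z1 \<noteq> 0" "\<not> cmod (z1 * deriv F z1 / F z1 - of_nat p) < M"
      by auto
    have "M \<le> cmod (of_real M * w z1)" using z1 wq[OF z1(1,2)] by simp
    hence w1: "1 \<le> cmod (w z1)" using M0 by (simp add: norm_mult)
    define R where "R = cmod z1"
    have R1: "R < 1" using z1 unfolding R_def by simp
    have cR: "cball 0 R \<subseteq> ball 0 1" using R1 by auto
    define S where "S = {z \<in> cball 0 R. 1 \<le> cmod (w z)}"
    have "closed S" unfolding S_def
      by (rule continuous_on_closed_Collect_le)
         (use contw cR in \<open>auto intro!: continuous_intros intro: continuous_on_subset\<close>)
    hence "compact S" unfolding S_def
      by (metis (no_types, lifting) bounded_cball bounded_subset compact_eq_bounded_closed mem_Collect_eq subsetI)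
    moreover have "S \<noteq> {}" using z1 w1 unfolding S_def R_def by auto
    ultimately obtain z0 where z0S: "z0 \<in> S" and z0min: "\<And>y. y \<in> S \<Longrightarrow> cmod z0 \<le> cmod y"
      using continuous_attains_inf[of S norm] by (auto intro: continuous_intros)
    define r0 where "r0 = cmod z0"
    have z0ne: "z0 \<noteq> 0" using z0S w0 unfolding S_def by auto
    have r0pos: "r0 > 0" using z0ne unfolding r0_def by simp
    have r0R: "r0 \<le> R" using z0S unfolding S_def r0_def by simp
    have z0b: "z0 \<in> ball 0 1" using z0S R1 unfolding S_def by auto
    have inner: "cmod (w z) < 1" if "cmod z < r0" for z
    proof (rule ccontr)
      assume "\<not> cmod (w z) < 1"
      hence "z \<in> S" using that r0R unfolding S_def by auto
      thus False using z0min that unfolding r0_def by force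
    qed
    have r0b: "cball 0 r0 \<subseteq> ball 0 1" using r0R R1 by auto
    define T where "T = {z \<in> cball 0 r0. cmod (w z) \<le> 1}"
    have "closed T" unfolding T_def
      by (rule continuous_on_closed_Collect_le)
         (use continuous_on_subset[OF contw r0b] in \<open>auto intro!: continuous_intros\<close>)
    moreover have "ball 0 r0 \<subseteq> T" unfolding T_def using inner by (auto intro: less_imp_le)
    ultimately have "closure (ball 0 r0) \<subseteq> T" by (rule closure_minimal[rotated])
    hence wle1: "cmod (w z) \<le> 1" if "z \<in> cball 0 r0" for z
      using that r0pos unfolding T_def by auto
    define W where "W = w z0"
    have W1: "cmod W = 1" using wle1[of z0] z0S unfolding W_def S_def r0_def by auto
    have Gb: "cmod (G z) \<le> 1 / r0 ^ n" if "z \<in> cball 0 r0" for z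
    proof (rule maximum_modulus_frontier[of G "cball 0 r0"])
      show "G holomorphic_on interior (cball 0 r0)"
        using holomorphic_on_subset[OF holG] r0b ball_subset_cball by (metis interior_cball order_trans)
      show "continuous_on (closure (cball 0 r0)) G"
        using holomorphic_on_imp_continuous_on[OF holomorphic_on_subset[OF holG r0b]] by simp
      show "bounded (cball 0 r0)" by simp
      show "z \<in> cball 0 r0" by fact
      fix u :: complex assume "u \<in> frontier (cball 0 r0)"
      hence u: "cmod u = r0" using r0pos by simp
      have "r0 ^ n * cmod (G u) \<le> 1" using wle1[of u] u unfolding w_def by (simp add: norm_mult norm_power)
      thus "cmod (G u) \<le> 1 / r0 ^ n" using r0pos by (simp add: field_simps)
    qed
    have wrad: "cmod (w (of_real t * z0)) \<le> t ^ n" if "0 \<le> t" "t \<le> 1" for t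
    proof -
      have "of_real t * z0 \<in> cball 0 r0" using that unfolding r0_def
        by (simp add: norm_mult mult_left_le_one_le)
      hence g: "cmod (G (of_real t * z0)) \<le> 1 / r0 ^ n" by (rule Gb)
      have "cmod (w (of_real t * z0)) = (t * r0) ^ n * cmod (G (of_real t * z0))"
        unfolding w_def r0_def using that by (simp add: norm_mult norm_power)
      also have "\<dots> \<le> (t * r0) ^ n * (1 / r0 ^ n)"
        using g that r0pos by (intro mult_left_mono) auto
      also have "\<dots> = t ^ n" using r0pos by (simp add: power_mult_distrib)
      finally show ?thesis .
    qed
    define X where "X = cnj W * z0 * deriv w z0"
    have WW: "cnj W * W = 1" using complex_norm_square[of W] W1 by (simp add: mult.commute)
    have ImX: "Im X = 0"
    proof -
      have g: "((\<lambda>s. z0 * exp (\<i> * s)) has_field_derivative z0 * \<i>) (at 0)"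
        by (auto intro!: derivative_eq_intros)
      have "(w has_field_derivative deriv w z0) (at ((\<lambda>s. z0 * exp (\<i> * s)) 0))"
        using wder[OF z0b] by simp
      from DERIV_chain2[OF this g]
      have "((\<lambda>s. cnj W * w (z0 * exp (\<i> * s))) has_field_derivative cnj W * (deriv w z0 * (z0 * \<i>))) (at (of_real 0))"
        by (auto intro: DERIV_cmult)
      from has_field_derivative_Re[OF has_vector_derivative_real_field[OF this]]
      have d: "((\<lambda>t. Re (cnj W * w (z0 * exp (\<i> * of_real t)))) has_real_derivative
               Re (cnj W * (deriv w z0 * (z0 * \<i>)))) (at 0)" by simp
      have "Re (cnj W * (deriv w z0 * (z0 * \<i>))) = 0"
      proof (rule DERIV_local_max[OF d zero_less_one], intro allI impI)
        fix y :: real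
        have "z0 * exp (\<i> * of_real y) \<in> cball 0 r0" unfolding r0_def by (simp add: norm_mult)
        hence "cmod (w (z0 * exp (\<i> * of_real y))) \<le> 1" by (rule wle1)
        hence "Re (cnj W * w (z0 * exp (\<i> * of_real y))) \<le> 1"
          using complex_Re_le_cmod[of "cnj W * w (z0 * exp (\<i> * of_real y))"] W1
          by (simp add: norm_mult)
        thus "Re (cnj W * w (z0 * exp (\<i> * of_real y))) \<le> Re (cnj W * w (z0 * exp (\<i> * of_real 0)))"
          using WW unfolding W_def by simp
      qed
      thus ?thesis unfolding X_def by (simp add: algebra_simps)
    qed
    have ReX: "Re X \<ge> real n"
    proof (rule ccontr)
      assume neg: "\<not> Re X \<ge> real n"
      have g: "((\<lambda>s. s * z0) has_field_derivative z0) (at 1)"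
        by (auto intro!: derivative_eq_intros)
      have "(w has_field_derivative deriv w z0) (at ((\<lambda>s. s * z0) 1))"
        using wder[OF z0b] by simp
      from DERIV_chain2[OF this g]
      have "((\<lambda>s. cnj W * w (s * z0)) has_field_derivative cnj W * (deriv w z0 * z0)) (at (of_real 1))"
        by (auto intro: DERIV_cmult)
      from has_field_derivative_Re[OF has_vector_derivative_real_field[OF this]]
      have d: "((\<lambda>t. Re (cnj W * w (of_real t * z0))) has_real_derivative Re X) (at 1)"
        unfolding X_def by (simp add: algebra_simps)
      have "((\<lambda>t. Re (cnj W * w (of_real t * z0)) - t ^ n) has_real_derivative Re X - real n) (at 1)"
        using DERIV_diff[OF d DERIV_pow[of n 1]] by simp
      from DERIV_neg_dec_left[OF this] neg obtain d where d0: "d > 0"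
        and dd: "\<And>h. h > 0 \<Longrightarrow> h < d \<Longrightarrow>
           Re (cnj W * w (of_real 1 * z0)) - 1 ^ n < Re (cnj W * w (of_real (1 - h) * z0)) - (1 - h) ^ n"
        by auto
      define h where "h = min (d / 2) (1 / 2)"
      have h0: "h > 0" "h < d" "h \<le> 1/2" using d0 unfolding h_def by auto
      have "Re (cnj W * w (of_real (1 - h) * z0)) \<le> cmod (w (of_real (1 - h) * z0))"
        using complex_Re_le_cmod[of "cnj W * w (of_real (1 - h) * z0)"] W1 by (simp add: norm_mult)
      also have "\<dots> \<le> (1 - h) ^ n" by (rule wrad) (use h0 in auto)
      finally have "Re (cnj W * w (of_real (1 - h) * z0)) - (1 - h) ^ n \<le> 0" by simp
      moreover have "Re (cnj W * w (of_real 1 * z0)) - 1 ^ n = 0" using WW unfolding W_def by simp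
      ultimately show False using dd[OF h0(1,2)] by linarith
    qed
    have z0ne': "z0 \<in> ball 0 1 - {0}" using z0b z0ne by auto
    have Fne: "F z0 \<noteq> 0" and F'ne: "deriv F z0 \<noteq> 0"
      using assms(7) z0ne' unfolding F_def by auto
    have q0: "z0 * deriv F z0 / F z0 = of_nat p + of_real M * W"
      using wq[OF z0b z0ne] unfolding W_def by (simp add: algebra_simps)
    have holF': "deriv F holomorphic_on ball 0 1" using holF by (simp add: holomorphic_deriv)
    have dF: "(F has_field_derivative deriv F z0) (at z0)"
      using holomorphic_derivI[OF holF _ z0b] by simp
    have ddF: "(deriv F has_field_derivative deriv (deriv F) z0) (at z0)"
      using holomorphic_derivI[OF holF' _ z0b] by simp
    define D where "D = (((deriv F z0 + z0 * deriv (deriv F) z0) * F z0 - z0 * deriv F z0 * deriv F z0)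
                     / (F z0 * F z0)) / of_real M"
    have "((\<lambda>z. (z * deriv F z / F z - of_nat p) / of_real M) has_field_derivative D) (at z0)"
    proof -
      have Mc: "complex_of_real M \<noteq> 0" using M0 by simp
      show ?thesis
        unfolding D_def using dF ddF Fne Mc by (auto intro!: derivative_eq_intros simp: field_simps)
    qed
    hence "(w has_field_derivative D) (at z0)"
    proof (rule has_field_derivative_transform_within_open[where S = "ball 0 1 - {0}"])
      show "open (ball 0 1 - {0::complex})" by auto
      show "z0 \<in> ball 0 1 - {0}" by fact
      fix x assume "x \<in> ball 0 1 - {0::complex}"
      thus "(x * deriv F x / F x - of_nat p) / of_real M = w x" using wq[of x] M0 by auto
    qed
    hence dw: "deriv w z0 = D" using wder[OF z0b] DERIV_unique by blast
    define m where "m = Re X"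
    have Xm: "X = of_real m" unfolding m_def using ImX by (simp add: complex_eq_iff)
    have XW: "z0 * deriv w z0 = X * W" unfolding X_def using WW
      by (metis mult.assoc mult.commute mult.left_neutral)
    have E: "- (z0 * deriv F z0 / F z0) + 1 + z0 * deriv (deriv F) z0 / deriv F z0 =
          of_real M * of_real m * W / (of_real (real p) + of_real M * W)"
    proof -
      have "of_real M * of_real m * W / (of_real (real p) + of_real M * W) =
            of_real M * (z0 * deriv w z0) / (z0 * deriv F z0 / F z0)"
        using XW Xm q0 by (simp add: mult.assoc)
      also have "\<dots> = - (z0 * deriv F z0 / F z0) + 1 + z0 * deriv (deriv F) z0 / deriv F z0"
        unfolding dw D_def using M0 Fne F'ne z0ne by (simp add: field_simps)
      finally show ?thesis by simp
    qed
    have "real n * M / (M + real p) \<le> Re (of_real M * of_real m * W / (of_real (real p) + of_real M * W))"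
      by (rule final_ineq) (use W1 assms(1,2,8) ReX q0 Fne F'ne z0ne in \<open>auto simp: m_def\<close>)
    moreover have "Re (- (z0 * deriv F z0 / F z0) + 1 + z0 * deriv (deriv F) z0 / deriv F z0)
                   < real n * M / (M + real p)"
      using assms(9) z0ne' unfolding F_def by blast
    ultimately show False unfolding E by linarith
  qed
qed

end
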